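(* There is an absolute constant $C>0$ such that for every prime $p$ there exists a Latin trade $T$ in $B_p$ with $|T|\le C\log p$ such that every symbol of $\mathbb{Z}_p$ occurs in $T$ either exactly twice or not at all.
   Context: A Latin square of order $p$ is viewed as a set of (row, column, symbol) triples in $\mathbb{Z}_p^3$. $B_p$ is the addition table of $\mathbb{Z}_p$: the Latin square with symbol $i+j \pmod p$ in cell $(i,j)$, $i,j\in\mathbb{Z}_p$. A Latin trade in a Latin square $L$ is a subset $T\subseteq L$ for which there is a partial Latin square $T'$ (a disjoint mate) such that $T$ and $T'$ occupy the same set of cells, $T\cap T'=\emptyset$, and each row (respectively column) of $T$ contains the same set of symbols as the corresponding row (column) of $T'$. $|T|$ is the number of triples in $T$. *)

theory Defs
  imports "HOL-Computational_Algebra.Primes" Complex_Main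
begin

text \<open>Latin squares of order p as sets of (row, column, symbol) triples over
  Z_p, represented by natural numbers in {0..<p}.\<close>

definition addtab :: "nat \<Rightarrow> (nat \<times> nat \<times> nat) set" where
  "addtab p = {(i, j, (i + j) mod p) | i j. i < p \<and> j < p}"

definition partial_latin_square :: "nat \<Rightarrow> (nat \<times> nat \<times> nat) set \<Rightarrow> bool" where
  "partial_latin_square p P \<longleftrightarrow>
     P \<subseteq> {0..<p} \<times> {0..<p} \<times> {0..<p} \<and>
     (\<forall>r c s s'. (r, c, s) \<in> P \<and> (r, c, s') \<in> P \<longrightarrow> s = s') \<and>
     (\<forall>r c c' s. (r, c, s) \<in> P \<and> (r, c', s) \<in> P \<longrightarrow> c = c') \<and>
     (\<forall>r r' c s. (r, c, s) \<in> P \<and> (r', c, s) \<in> P \<longrightarrow> r = r')"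

definition cells :: "(nat \<times> nat \<times> nat) set \<Rightarrow> (nat \<times> nat) set" where
  "cells P = {(r, c). \<exists>s. (r, c, s) \<in> P}"

definition row_syms :: "(nat \<times> nat \<times> nat) set \<Rightarrow> nat \<Rightarrow> nat set" where
  "row_syms P r = {s. \<exists>c. (r, c, s) \<in> P}"

definition col_syms :: "(nat \<times> nat \<times> nat) set \<Rightarrow> nat \<Rightarrow> nat set" where
  "col_syms P c = {s. \<exists>r. (r, c, s) \<in> P}"

definition latin_trade :: "nat \<Rightarrow> (nat \<times> nat \<times> nat) set \<Rightarrow> (nat \<times> nat \<times> nat) set \<Rightarrow> bool" where
  "latin_trade p L T \<longleftrightarrow>
     T \<noteq> {} \<and> T \<subseteq> L \<and>
     (\<exists>T'. partial_latin_square p T' \<and> cells T' = cells T \<and> T \<inter> T' = {} \<and>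
           (\<forall>r. row_syms T' r = row_syms T r) \<and> (\<forall>c. col_syms T' c = col_syms T c))"

definition sym_count :: "(nat \<times> nat \<times> nat) set \<Rightarrow> nat \<Rightarrow> nat" where
  "sym_count T s = card {(r, c). (r, c, s) \<in> T}"

end

theory Submission
  imports Defs
begin


type_synonym sq = "nat \<times> nat \<times> nat"

fun cval :: "sq \<Rightarrow> nat" where "cval (x,y,s) = x + y + s"
fun side :: "sq \<Rightarrow> nat" where "side (x,y,s) = s"
fun mainp :: "sq \<times> bool \<Rightarrow> nat \<times> nat" where
  "mainp ((x,y,s),b) = (if b then (x+s,y+s) else (x,y))"
fun antip :: "sq \<times> bool \<Rightarrow> nat \<times> nat" where
  "antip ((x,y,s),b) = (if b then (x+s,y) else (x,y+s))"

definition toks :: "sq list \<Rightarrow> (sq \<times> bool) list" where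
  "toks L = concat (map (\<lambda>q. [(q,False),(q,True)]) L)"

definition MS :: "sq list \<Rightarrow> (nat \<times> nat) multiset" where
  "MS L = mset (map mainp (toks L))"
definition AS :: "sq list \<Rightarrow> (nat \<times> nat) multiset" where
  "AS L = mset (map antip (toks L))"

definition modp :: "nat \<Rightarrow> nat \<times> nat \<Rightarrow> nat \<times> nat" where
  "modp p z = (fst z mod p, snd z mod p)"

lemma set_toks: "set (toks L) = set L \<times> UNIV"
  by (auto simp: toks_def)

lemma distinct_toks: "distinct L \<Longrightarrow> distinct (toks L)"
  by (induction L) (auto simp: toks_def)

lemma length_toks: "length (toks L) = 2 * length L"
  by (induction L) (auto simp: toks_def)

definition TT :: "nat \<Rightarrow> sq list \<Rightarrow> (nat \<times> nat \<times> nat) set" where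
  "TT p L = (\<lambda>t. (fst (modp p (antip t)), snd (modp p (antip t)), cval (fst t) mod p)) ` set (toks L)"
definition TT' :: "nat \<Rightarrow> sq list \<Rightarrow> (nat \<times> nat \<times> nat) set" where
  "TT' p L = (\<lambda>t. (fst (modp p (mainp t)), snd (modp p (mainp t)), cval (fst t) mod p)) ` set (toks L)"

lemma anti_sum: "(fst (antip t) + snd (antip t)) = cval (fst t)"
  by (cases t) auto
lemma main_sum_row: "fst (mainp (q,False)) = fst (antip (q,False))"
  by (cases q) auto

lemma trade_from_squares:
  fixes p :: nat and L :: "sq list"
  assumes p: "1 < p" and ne: "L \<noteq> []"
    and dc: "distinct (map (\<lambda>q. cval q mod p) L)"
    and sd: "\<forall>q\<in>set L. side q mod p \<noteq> 0"
    and cor: "image_mset (modp p) (MS L) = image_mset (modp p) (AS L)"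
  shows "\<exists>T. latin_trade p (addtab p) T \<and> card T = 2 * length L \<and>
           (\<forall>s<p. sym_count T s = 2 \<or> sym_count T s = 0)"
proof -
  define A where "A = (\<lambda>t. modp p (antip t))"
  define M where "M = (\<lambda>t. modp p (mainp t))"
  define C where "C = (\<lambda>t::sq\<times>bool. cval (fst t) mod p)"
  have distL: "distinct L" using dc by (simp add: distinct_map)
  have injC: "inj_on (\<lambda>q. cval q mod p) (set L)" using dc by (simp add: distinct_map)
  have dtok: "distinct (toks L)" using distL by (rule distinct_toks)
  have Csum: "C t = (fst (A t) + snd (A t)) mod p" for t
    unfolding C_def A_def modp_def
    by (simp add: anti_sum[symmetric] mod_add_eq)
  have injA: "inj_on A (set (toks L))"
  proof (rule inj_onI)
    fix t t' assume t: "t \<in> set (toks L)" and t': "t' \<in> set (toks L)" and e: "A t = A t'"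
    have "C t = C t'" using e by (simp add: Csum)
    hence q: "fst t = fst t'" using injC t t' unfolding C_def set_toks
      by (auto dest: inj_onD)
    obtain x y s b where tt: "t = ((x,y,s),b)" by (metis prod.exhaust)
    obtain b' where tt': "t' = ((x,y,s),b')" using q tt by (metis prod.collapse prod.inject)
    have "s mod p \<noteq> 0" using sd t unfolding tt set_toks by auto
    moreover have "b = b'"
    proof (rule ccontr)
      assume "b \<noteq> b'"
      hence "x mod p = (x+s) mod p" using e unfolding A_def modp_def tt tt'
        by (cases b) auto
      hence "p dvd s" using mod_eq_dvd_iff_nat[of x "x+s" p] by simp
      hence "s mod p = 0" by simp
      thus False using \<open>s mod p \<noteq> 0\<close> by simp
    qed
    ultimately show "t = t'" using tt tt' by simp
  qed
  have dtA: "distinct (map A (toks L))" using injA dtok by (simp add: distinct_map)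
  have corM: "mset (map M (toks L)) = mset (map A (toks L))"
    using cor unfolding MS_def AS_def M_def A_def by (simp add: mset_map multiset.map_comp comp_def)
  have dtM: "distinct (map M (toks L))" using mset_eq_imp_distinct_iff[OF corM] dtA by simp
  have injM: "inj_on M (set (toks L))" using dtM by (simp add: distinct_map)
  have imgMA: "M ` set (toks L) = A ` set (toks L)"
    using arg_cong[OF corM, of set_mset] by simp
  have rowMA: "fst (M t) = fst (A t)" for t
    unfolding M_def A_def modp_def by (cases t) auto
  define nb where "nb = (\<lambda>t::sq\<times>bool. (fst t, \<not> snd t))"
  have colMA: "snd (M t) = snd (A (nb t))" for t
    unfolding M_def A_def modp_def nb_def by (cases t) auto
  have Cnb: "C (nb t) = C t" for t unfolding C_def nb_def by simp
  have nbtok: "nb t \<in> set (toks L) \<longleftrightarrow> t \<in> set (toks L)" for t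
    unfolding nb_def set_toks by (cases t) auto
  have nbnb: "nb (nb t) = t" for t unfolding nb_def by simp
  have Cq: "t \<in> set (toks L) \<Longrightarrow> t' \<in> set (toks L) \<Longrightarrow> C t = C t' \<Longrightarrow> fst t = fst t'" for t t'
    using injC unfolding C_def set_toks by (auto dest: inj_onD)
  have spos: "t \<in> set (toks L) \<Longrightarrow> side (fst t) mod p \<noteq> 0" for t
    using sd unfolding set_toks by auto
  have shift_ne: "x mod p \<noteq> (x + s) mod p" if "s mod p \<noteq> 0" for x s :: nat
  proof
    assume "x mod p = (x + s) mod p"
    hence "p dvd s" using mod_eq_dvd_iff_nat[of x "x+s" p] by simp
    thus False using that by simp
  qed
  have p0: "0 < p" using p by simp
  have Alt: "fst (A t) < p" "snd (A t) < p" for t unfolding A_def modp_def using p0 by auto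
  have Mlt: "fst (M t) < p" "snd (M t) < p" for t unfolding M_def modp_def using p0 by auto
  have Clt: "C t < p" for t unfolding C_def using p0 by auto
  define T where "T = (\<lambda>t. (fst (A t), snd (A t), C t)) ` set (toks L)"
  define T' where "T' = (\<lambda>t. (fst (M t), snd (M t), C t)) ` set (toks L)"
  have sub: "T \<subseteq> addtab p"
    unfolding T_def addtab_def using Csum Alt by fastforce
  have cellsT: "cells T = A ` set (toks L)"
  proof (rule set_eqI)
    fix z :: "nat \<times> nat" obtain r c where z: "z = (r,c)" by (cases z)
    show "z \<in> cells T \<longleftrightarrow> z \<in> A ` set (toks L)"
      unfolding z cells_def T_def by (auto simp: image_iff prod_eq_iff)
  qed
  have cellsT': "cells T' = M ` set (toks L)"
  proof (rule set_eqI)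
    fix z :: "nat \<times> nat" obtain r c where z: "z = (r,c)" by (cases z)
    show "z \<in> cells T' \<longleftrightarrow> z \<in> M ` set (toks L)"
      unfolding z cells_def T'_def by (auto simp: image_iff prod_eq_iff)
  qed
  have sameq: "t = t'" if H: "t \<in> set (toks L)" "t' \<in> set (toks L)" "C t = C t'" "fst (M t) = fst (M t')" for t t'
  proof -
    obtain q b where tt: "t = (q,b)" by (cases t)
    obtain b' where tt': "t' = (q,b')" using Cq[OF H(1-3)] tt by (cases t') auto
    obtain x y s where qq: "q = (x,y,s)" by (cases q)
    have "s mod p \<noteq> 0" using spos[OF H(1)] tt qq by simp
    show ?thesis
    proof (rule ccontr)
      assume "t \<noteq> t'"
      hence "b \<noteq> b'" using tt tt' by simp
      hence "x mod p = (x+s) mod p" using H(4) unfolding tt tt' qq M_def modp_def by (cases b) auto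
      thus False using shift_ne[OF \<open>s mod p \<noteq> 0\<close>] by simp
    qed
  qed
  have sameqc: "t = t'" if H: "t \<in> set (toks L)" "t' \<in> set (toks L)" "C t = C t'" "snd (M t) = snd (M t')" for t t'
  proof -
    obtain q b where tt: "t = (q,b)" by (cases t)
    obtain b' where tt': "t' = (q,b')" using Cq[OF H(1-3)] tt by (cases t') auto
    obtain x y s where qq: "q = (x,y,s)" by (cases q)
    have "s mod p \<noteq> 0" using spos[OF H(1)] tt qq by simp
    show ?thesis
    proof (rule ccontr)
      assume "t \<noteq> t'"
      hence "b \<noteq> b'" using tt tt' by simp
      hence "y mod p = (y+s) mod p" using H(4) unfolding tt tt' qq M_def modp_def by (cases b) auto
      thus False using shift_ne[OF \<open>s mod p \<noteq> 0\<close>] by simp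
    qed
  qed
  have pls: "partial_latin_square p T'"
    unfolding partial_latin_square_def
  proof (intro conjI allI impI)
    show "T' \<subseteq> {0..<p} \<times> {0..<p} \<times> {0..<p}" unfolding T'_def using Mlt Clt by auto
  next
    fix r c s s' assume "(r, c, s) \<in> T' \<and> (r, c, s') \<in> T'"
    then obtain t t' where t: "t \<in> set (toks L)" "(r,c,s) = (fst (M t), snd (M t), C t)"
      and t': "t' \<in> set (toks L)" "(r,c,s') = (fst (M t'), snd (M t'), C t')"
      unfolding T'_def by blast
    have "M t = M t'" using t t' by (simp add: prod_eq_iff)
    hence "t = t'" using injM t(1) t'(1) by (auto dest: inj_onD)
    thus "s = s'" using t t' by simp
  next
    fix r c c' s assume "(r, c, s) \<in> T' \<and> (r, c', s) \<in> T'"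
    then obtain t t' where t: "t \<in> set (toks L)" "(r,c,s) = (fst (M t), snd (M t), C t)"
      and t': "t' \<in> set (toks L)" "(r,c',s) = (fst (M t'), snd (M t'), C t')"
      unfolding T'_def by blast
    have "t = t'" using sameq[OF t(1) t'(1)] t t' by simp
    thus "c = c'" using t t' by simp
  next
    fix r r' c s assume "(r, c, s) \<in> T' \<and> (r', c, s) \<in> T'"
    then obtain t t' where t: "t \<in> set (toks L)" "(r,c,s) = (fst (M t), snd (M t), C t)"
      and t': "t' \<in> set (toks L)" "(r',c,s) = (fst (M t'), snd (M t'), C t')"
      unfolding T'_def by blast
    have "t = t'" using sameqc[OF t(1) t'(1)] t t' by simp
    thus "r = r'" using t t' by simp
  qed
  have disj: "T \<inter> T' = {}"
  proof (rule ccontr)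
    assume "T \<inter> T' \<noteq> {}"
    then obtain t t' where t: "t \<in> set (toks L)" and t': "t' \<in> set (toks L)"
      and e: "(fst (A t), snd (A t), C t) = (fst (M t'), snd (M t'), C t')"
      unfolding T_def T'_def by blast
    obtain q b where tt: "t = (q,b)" by (cases t)
    obtain b' where tt': "t' = (q,b')" using Cq[OF t t'] e tt by (cases t') auto
    obtain x y s where qq: "q = (x,y,s)" by (cases q)
    have sp: "s mod p \<noteq> 0" using spos[OF t] tt qq by simp
    have "x mod p = (x+s) mod p \<or> y mod p = (y+s) mod p"
      using e unfolding tt tt' qq A_def M_def modp_def by (cases b; cases b') auto
    thus False using shift_ne[OF sp] by metis
  qed
  have rows: "row_syms T' r = row_syms T r" for r
    unfolding row_syms_def T_def T'_def rowMA by (auto simp: image_iff)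
  have cols: "col_syms T' c = col_syms T c" for c
  proof
    show "col_syms T' c \<subseteq> col_syms T c"
    proof
      fix s assume "s \<in> col_syms T' c"
      then obtain t where t: "t \<in> set (toks L)" "snd (M t) = c" "C t = s"
        unfolding col_syms_def T'_def by auto
      have "(fst (A (nb t)), c, s) \<in> T"
        unfolding T_def using t nbtok[of t] colMA[of t] Cnb[of t] by (auto simp: image_iff)
      thus "s \<in> col_syms T c" unfolding col_syms_def by auto
    qed
  next
    show "col_syms T c \<subseteq> col_syms T' c"
    proof
      fix s assume "s \<in> col_syms T c"
      then obtain t where t: "t \<in> set (toks L)" "snd (A t) = c" "C t = s"
        unfolding col_syms_def T_def by auto
      have "(fst (M (nb t)), c, s) \<in> T'"
        unfolding T'_def using t nbtok[of t] colMA[of "nb t"] Cnb[of t] nbnb[of t]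
        by (auto simp: image_iff)
      thus "s \<in> col_syms T' c" unfolding col_syms_def by auto
    qed
  qed
  have neT: "T \<noteq> {}"
    using ne unfolding T_def set_toks by auto
  have lt: "latin_trade p (addtab p) T"
    unfolding latin_trade_def using neT sub pls cellsT cellsT' imgMA disj rows cols by metis
  have injT: "inj_on (\<lambda>t. (fst (A t), snd (A t), C t)) (set (toks L))"
  proof (rule inj_onI)
    fix t t' assume t: "t \<in> set (toks L)" "t' \<in> set (toks L)"
      and e: "(fst (A t), snd (A t), C t) = (fst (A t'), snd (A t'), C t')"
    have "A t = A t'" using e by (simp add: prod_eq_iff)
    thus "t = t'" using injA t by (auto dest: inj_onD)
  qed
  have cardT: "card T = 2 * length L"
    unfolding T_def card_image[OF injT] distinct_card[OF dtok] length_toks ..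
  have symc: "sym_count T s = 2 \<or> sym_count T s = 0" if "s < p" for s
  proof -
    have eq: "{(r, c). (r, c, s) \<in> T} = A ` {t \<in> set (toks L). C t = s}"
    proof (rule set_eqI)
      fix z :: "nat \<times> nat" obtain r c where z: "z = (r,c)" by (cases z)
      show "z \<in> {(r, c). (r, c, s) \<in> T} \<longleftrightarrow> z \<in> A ` {t \<in> set (toks L). C t = s}"
        unfolding z T_def by (auto simp: image_iff prod_eq_iff)
    qed
    have c1: "sym_count T s = card {t \<in> set (toks L). C t = s}"
      unfolding sym_count_def eq by (rule card_image) (rule inj_on_subset[OF injA], auto)
    show ?thesis
    proof (cases "\<exists>q\<in>set L. cval q mod p = s")
      case True
      then obtain q where q: "q \<in> set L" "cval q mod p = s" by blast
      have "{t \<in> set (toks L). C t = s} = {(q,False),(q,True)}"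
      proof (rule set_eqI)
        fix t :: "sq \<times> bool"
        show "t \<in> {t \<in> set (toks L). C t = s} \<longleftrightarrow> t \<in> {(q,False),(q,True)}"
        proof
          assume a: "t \<in> {t \<in> set (toks L). C t = s}"
          have "fst t = q" using Cq[of t "(q,False)"] a q unfolding set_toks C_def by auto
          thus "t \<in> {(q,False),(q,True)}" by (cases t) auto
        qed (use q in \<open>auto simp: set_toks C_def\<close>)
      qed
      thus ?thesis using c1 by simp
    next
      case False
      hence "{t \<in> set (toks L). C t = s} = {}" unfolding set_toks C_def by auto
      thus ?thesis using c1 by simp
    qed
  qed
  show ?thesis using lt cardT symc by blast
qed



definition tiles :: "sq list \<Rightarrow> nat \<Rightarrow> nat \<Rightarrow> nat \<Rightarrow> nat \<Rightarrow> bool" where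
  "tiles L x0 y0 x1 y1 \<longleftrightarrow> MS L + {#(x0,y1),(x1,y0)#} = AS L + {#(x0,y0),(x1,y1)#}"

lemma MS_append[simp]: "MS (L1 @ L2) = MS L1 + MS L2"
  by (simp add: MS_def toks_def)
lemma AS_append[simp]: "AS (L1 @ L2) = AS L1 + AS L2"
  by (simp add: AS_def toks_def)
lemma MS_Nil[simp]: "MS [] = {#}" by (simp add: MS_def toks_def)
lemma AS_Nil[simp]: "AS [] = {#}" by (simp add: AS_def toks_def)
lemma MS_single: "MS [(x,y,s)] = {#(x,y),(x+s,y+s)#}" by (simp add: MS_def toks_def)
lemma AS_single: "AS [(x,y,s)] = {#(x,y+s),(x+s,y)#}" by (simp add: AS_def toks_def)

lemma msum2:
  fixes A1 A2 B1 B2 X1 X2 Y1 Y2 :: "'a multiset"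
  assumes "A1 + X1 = B1 + Y1" "A2 + X2 = B2 + Y2"
  shows "(A1 + A2) + (X1 + X2) = (B1 + B2) + (Y1 + Y2)"
proof -
  have "(A1 + A2) + (X1 + X2) = (A1 + X1) + (A2 + X2)" by (simp add: ac_simps)
  also have "\<dots> = (B1 + Y1) + (B2 + Y2)" using assms by simp
  also have "\<dots> = (B1 + B2) + (Y1 + Y2)" by (simp add: ac_simps)
  finally show ?thesis .
qed

lemma mcancel:
  fixes A B X Y XX YY :: "'a multiset"
  assumes "A + XX = B + YY" "XX + Y = YY + X"
  shows "A + X = B + Y"
proof -
  have "(A + X) + XX = (A + XX) + X" by (simp add: ac_simps)
  also have "\<dots> = B + (YY + X)" using assms(1) by (simp add: ac_simps)
  also have "\<dots> = B + (XX + Y)" using assms(2) by simp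
  also have "\<dots> = (B + Y) + XX" by (simp add: ac_simps)
  finally show ?thesis by simp
qed

lemma tiles_square: "x1 = x + s \<Longrightarrow> y1 = y + s \<Longrightarrow> tiles [(x,y,s)] x y x1 y1"
  unfolding tiles_def MS_single AS_single by (simp add: add_mset_commute)

lemma tiles_Nil_h: "tiles [] x y x y1"
  unfolding tiles_def by (simp add: add_mset_commute)
lemma tiles_Nil_v: "tiles [] x y x1 y"
  unfolding tiles_def by (simp add: add_mset_commute)

lemma tiles_hsplit:
  assumes "tiles L1 x0 y0 x1 y1" "tiles L2 x1 y0 x2 y1"
  shows "tiles (L1 @ L2) x0 y0 x2 y1"
proof -
  note a = assms[unfolded tiles_def]
  have s: "(MS L1 + MS L2) + ({#(x0,y1),(x1,y0)#} + {#(x1,y1),(x2,y0)#}) = (AS L1 + AS L2) + ({#(x0,y0),(x1,y1)#} + {#(x1,y0),(x2,y1)#})"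
    by (rule msum2[OF a(1) a(2)])
  show ?thesis unfolding tiles_def
    by (simp only: MS_append AS_append, rule mcancel[OF s]) (simp add: add_mset_commute)
qed

lemma tiles_vsplit:
  assumes "tiles L1 x0 y0 x1 y1" "tiles L2 x0 y1 x1 y2"
  shows "tiles (L1 @ L2) x0 y0 x1 y2"
proof -
  note a = assms[unfolded tiles_def]
  have s: "(MS L1 + MS L2) + ({#(x0,y1),(x1,y0)#} + {#(x0,y2),(x1,y1)#}) = (AS L1 + AS L2) + ({#(x0,y0),(x1,y1)#} + {#(x0,y1),(x1,y2)#})"
    by (rule msum2[OF a(1) a(2)])
  show ?thesis unfolding tiles_def
    by (simp only: MS_append AS_append, rule mcancel[OF s]) (simp add: add_mset_commute)
qed

function euclid :: "nat \<Rightarrow> nat \<Rightarrow> nat \<Rightarrow> nat \<Rightarrow> sq list" where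
  "euclid x y W H = (if W = 0 \<or> H = 0 then [] else
     if H \<le> W then (x,y,H) # euclid (x+H) y (W-H) H
     else (x,y,W) # euclid x (y+W) W (H-W))"
  by pat_completeness auto
termination by (relation "measure (\<lambda>(x,y,W,H). W + H)") auto

declare euclid.simps[simp del]

lemma tiles_euclid: "tiles (euclid x y W H) x y (x+W) (y+H)"
proof (induction x y W H rule: euclid.induct)
  case (1 x y W H)
  show ?case
  proof (cases "W = 0 \<or> H = 0")
    case True thus ?thesis
      using tiles_Nil_h[of x y "y+H"] tiles_Nil_v[of x y "x+W"] by (auto simp: euclid.simps)
  next
    case False
    show ?thesis
    proof (cases "H \<le> W")
      case True
      have e: "euclid x y W H = [(x,y,H)] @ euclid (x+H) y (W-H) H" using False True by (simp add: euclid.simps)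
      have "tiles (euclid (x+H) y (W-H) H) (x+H) y (x+H+(W-H)) (y+H)" using 1(1) False True by blast
      hence r: "tiles (euclid (x+H) y (W-H) H) (x+H) y (x+W) (y+H)" using True by simp
      have sq: "tiles [(x,y,H)] x y (x+H) (y+H)" by (rule tiles_square) auto
      show ?thesis unfolding e by (rule tiles_hsplit[OF sq r])
    next
      case False2: False
      have e: "euclid x y W H = [(x,y,W)] @ euclid x (y+W) W (H-W)" using False False2 by (simp add: euclid.simps)
      have "tiles (euclid x (y+W) W (H-W)) x (y+W) (x+W) (y+W+(H-W))" using 1(2) False False2 by blast
      hence r: "tiles (euclid x (y+W) W (H-W)) x (y+W) (x+W) (y+H)" using False2 by simp
      have sq: "tiles [(x,y,W)] x y (x+W) (y+W)" by (rule tiles_square) auto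
      show ?thesis unfolding e by (rule tiles_vsplit[OF sq r])
    qed
  qed
qed

lemma tiles_pinwheel:
  assumes "tiles N 0 0 w h" "tiles B w 0 W be" "tiles D 0 h dl H" "tiles C dl be W H" "tiles M w be dl h"
  shows "tiles (N @ B @ D @ C @ M) 0 0 W H"
proof -
  note a = assms[unfolded tiles_def]
  have s: "(MS N + (MS B + (MS D + (MS C + MS M)))) + ({#(0,h),(w,0)#} + ({#(w,be),(W,0)#} + ({#(0,H),(dl,h)#} + ({#(dl,H),(W,be)#} + {#(w,h),(dl,be)#}))))
     = (AS N + (AS B + (AS D + (AS C + AS M)))) + ({#(0,0),(w,h)#} + ({#(w,0),(W,be)#} + ({#(0,h),(dl,H)#} + ({#(dl,be),(W,H)#} + {#(w,be),(dl,h)#}))))"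
    by (rule msum2[OF a(1) msum2[OF a(2) msum2[OF a(3) msum2[OF a(4) a(5)]]]])
  show ?thesis unfolding tiles_def
    by (simp only: MS_append AS_append, rule mcancel[OF s]) (simp add: add_mset_commute)
qed

lemma tiles_close_h:
  assumes "tiles L 0 0 w h" "h mod p = 0"
  shows "image_mset (modp p) (MS L) = image_mset (modp p) (AS L)"
proof -
  have "image_mset (modp p) (MS L + {#(0,h),(w,0)#}) = image_mset (modp p) (AS L + {#(0,0),(w,h)#})"
    using assms(1) unfolding tiles_def by simp
  hence "image_mset (modp p) (MS L) + {#(0,0),(w mod p,0)#} = image_mset (modp p) (AS L) + {#(0,0),(w mod p,0)#}"
    using assms(2) by (simp add: modp_def add_mset_commute)
  thus ?thesis by simp
qed

lemma tiles_close_w: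
  assumes "tiles L 0 0 w h" "w mod p = 0"
  shows "image_mset (modp p) (MS L) = image_mset (modp p) (AS L)"
proof -
  have "image_mset (modp p) (MS L + {#(0,h),(w,0)#}) = image_mset (modp p) (AS L + {#(0,0),(w,h)#})"
    using assms(1) unfolding tiles_def by simp
  hence "image_mset (modp p) (MS L) + {#(0,h mod p),(0,0)#} = image_mset (modp p) (AS L) + {#(0,h mod p),(0,0)#}"
    using assms(2) by (simp add: modp_def add_mset_commute)
  thus ?thesis by simp
qed



lemma euclid_props:
  "q \<in> set (euclid x y W H) \<Longrightarrow> x + y < cval q \<and> cval q < x + y + W + H \<and> 0 < side q \<and> side q \<le> W \<and> side q \<le> H"
proof (induction x y W H rule: euclid.induct)
  case (1 x y W H)
  show ?case
  proof (cases "W = 0 \<or> H = 0")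
    case True thus ?thesis using 1(3) by (simp add: euclid.simps)
  next
    case False
    show ?thesis
    proof (cases "H \<le> W")
      case True
      have "q = (x,y,H) \<or> q \<in> set (euclid (x+H) y (W-H) H)" using 1(3) False True by (simp add: euclid.simps)
      thus ?thesis
      proof
        assume "q = (x,y,H)" thus ?thesis using False True by auto
      next
        assume "q \<in> set (euclid (x+H) y (W-H) H)"
        from 1(1)[OF False True this] show ?thesis using True by auto
      qed
    next
      case False2: False
      have "q = (x,y,W) \<or> q \<in> set (euclid x (y+W) W (H-W))" using 1(3) False False2 by (simp add: euclid.simps)
      thus ?thesis
      proof
        assume "q = (x,y,W)" thus ?thesis using False False2 by auto
      next
        assume "q \<in> set (euclid x (y+W) W (H-W))"
        from 1(2)[OF False False2 this] show ?thesis using False2 by auto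
      qed
    qed
  qed
qed

lemma euclid_distinct: "distinct (map cval (euclid x y W H))"
proof (induction x y W H rule: euclid.induct)
  case (1 x y W H)
  show ?case
  proof (cases "W = 0 \<or> H = 0")
    case True thus ?thesis by (simp add: euclid.simps)
  next
    case False
    show ?thesis
    proof (cases "H \<le> W")
      case True
      have "\<forall>q\<in>set (euclid (x+H) y (W-H) H). x + y + H < cval q"
      proof
        fix q assume "q \<in> set (euclid (x+H) y (W-H) H)"
        from euclid_props[OF this] show "x + y + H < cval q" by simp
      qed
      moreover have "euclid x y W H = (x,y,H) # euclid (x+H) y (W-H) H"
        by (subst euclid.simps) (use False True in simp)
      ultimately show ?thesis using 1(1)[OF False True] by (fastforce simp: image_iff)
    next
      case False2: False
      have "\<forall>q\<in>set (euclid x (y+W) W (H-W)). x + y + W < cval q"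
      proof
        fix q assume "q \<in> set (euclid x (y+W) W (H-W))"
        from euclid_props[OF this] show "x + y + W < cval q" by simp
      qed
      moreover have "euclid x y W H = (x,y,W) # euclid x (y+W) W (H-W)"
        by (subst euclid.simps) (use False False2 in simp)
      ultimately show ?thesis using 1(2)[OF False False2] by (fastforce simp: image_iff)
    qed
  qed
qed

lemma euclid_even:
  "even W \<Longrightarrow> even H \<Longrightarrow> q \<in> set (euclid x y W H) \<Longrightarrow> \<exists>t. cval q = x + y + 2*t"
proof (induction x y W H rule: euclid.induct)
  case (1 x y W H)
  show ?case
  proof (cases "W = 0 \<or> H = 0")
    case True thus ?thesis using 1(5) by (simp add: euclid.simps)
  next
    case False
    show ?thesis
    proof (cases "H \<le> W")
      case True
      have "q = (x,y,H) \<or> q \<in> set (euclid (x+H) y (W-H) H)" using 1(5) False True by (simp add: euclid.simps)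
      thus ?thesis
      proof
        assume "q = (x,y,H)" thus ?thesis using 1(4) by (auto elim!: evenE)
      next
        assume a: "q \<in> set (euclid (x+H) y (W-H) H)"
        obtain t where "cval q = x + H + y + 2*t" using 1(1)[OF False True _ _ a] 1(3,4) True by auto
        moreover obtain u where "H = 2*u" using 1(4) by (auto elim!: evenE)
        ultimately have "cval q = x + y + 2*(t+u)" by simp
        thus ?thesis by blast
      qed
    next
      case False2: False
      have "q = (x,y,W) \<or> q \<in> set (euclid x (y+W) W (H-W))" using 1(5) False False2 by (simp add: euclid.simps)
      thus ?thesis
      proof
        assume "q = (x,y,W)" thus ?thesis using 1(3) by (auto elim!: evenE)
      next
        assume a: "q \<in> set (euclid x (y+W) W (H-W))"
        obtain t where "cval q = x + (y + W) + 2*t" using 1(2)[OF False False2 _ _ a] 1(3,4) False2 by auto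
        moreover obtain u where "W = 2*u" using 1(3) by (auto elim!: evenE)
        ultimately have "cval q = x + y + 2*(t+u)" by simp
        thus ?thesis by blast
      qed
    qed
  qed
qed

lemma euclid_length:
  "0 < g \<Longrightarrow> g dvd W \<Longrightarrow> g dvd H \<Longrightarrow> length (euclid x y W H) * g \<le> W + H"
proof (induction x y W H rule: euclid.induct)
  case (1 x y W H)
  show ?case
  proof (cases "W = 0 \<or> H = 0")
    case True thus ?thesis by (simp add: euclid.simps)
  next
    case False
    show ?thesis
    proof (cases "H \<le> W")
      case True
      have IH: "length (euclid (x+H) y (W-H) H) * g \<le> W - H + H"
        using 1(1)[OF False True 1(3)] 1(4,5) True by (simp add: dvd_diff_nat)
      have "g \<le> H" using 1(3,5) False by (simp add: dvd_imp_le)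
      thus ?thesis using IH False True by (simp add: euclid.simps)
    next
      case False2: False
      have IH: "length (euclid x (y+W) W (H-W)) * g \<le> W + (H - W)"
        using 1(2)[OF False False2 1(3)] 1(4,5) False2 by (simp add: dvd_diff_nat)
      have "g \<le> W" using 1(3,4) False by (simp add: dvd_imp_le)
      thus ?thesis using IH False False2 by (simp add: euclid.simps)
    qed
  qed
qed

lemma dist3:
  fixes W H d :: nat
  assumes "distinct xs" "distinct zs" "\<forall>v\<in>set xs. v < W" "\<forall>v\<in>set zs. W < v \<and> v < H" "W < H" "0 < d"
  shows "distinct (xs @ [W, H, H + d] @ zs)"
proof -
  have a: "W \<notin> set xs" "H \<notin> set xs" "H + d \<notin> set xs" using assms(3,5) by auto
  have b: "W \<notin> set zs" "H \<notin> set zs" "H + d \<notin> set zs" using assms(4) by auto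
  have c: "set xs \<inter> set zs = {}" using assms(3,4) by fastforce
  show ?thesis using assms(1,2,5,6) a b c by (auto simp: distinct_append)
qed

definition good :: "sq list \<Rightarrow> nat \<Rightarrow> nat \<Rightarrow> bool" where
  "good L w h \<longleftrightarrow> tiles L 0 0 w h \<and> distinct (map cval L) \<and>
     (\<forall>q\<in>set L. 0 < side q \<and> side q \<le> w \<and> cval q \<le> 2*w)"

definition gad :: "sq list \<Rightarrow> nat \<Rightarrow> nat \<Rightarrow> nat \<Rightarrow> nat \<Rightarrow> nat \<Rightarrow> sq list" where
  "gad N w h a b m = N @ [(w,0, w+(2*a+b)*m)] @ [(0,h,w+a*m)] @
     [(w+a*m, w+(2*a+b)*m, w+(a+b)*m)] @ euclid w (w+(2*a+b)*m) (a*m) (b*m)"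

lemma gad_good:
  assumes g: "good N w h" and pos: "0 < a" "0 < b" "0 < m" and hw: "h = w + 2*(a+b)*m"
  shows "good (gad N w h a b m) (2*w+(2*a+b)*m) (2*w+(3*a+2*b)*m)"
proof -
  define W where "W = 2*w+(2*a+b)*m"
  define H where "H = 2*w+(3*a+2*b)*m"
  define be where "be = w+(2*a+b)*m"
  define dl where "dl = w + a*m"
  define ga where "ga = w+(a+b)*m"
  define M where "M = euclid w be (a*m) (b*m)"
  define A where "A = a*m"
  define B where "B = b*m"
  have A0: "0 < A" and B0: "0 < B" using pos by (auto simp: A_def B_def)
  have Weq: "W = 2*w + 2*A + B" and Heq: "H = 2*w + 3*A + 2*B" and beq: "be = w + 2*A + B"
    and dleq: "dl = w + A" and gaeq: "ga = w + A + B" and hweq: "h = w + 2*A + 2*B"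
    unfolding W_def H_def be_def dl_def ga_def A_def B_def hw by (simp_all add: algebra_simps)
  have gd: "gad N w h a b m = N @ [(w,0,be)] @ [(0,h,dl)] @ [(dl,be,ga)] @ M"
    unfolding gad_def be_def dl_def ga_def M_def ..
  have tN: "tiles N 0 0 w h" and dN: "distinct (map cval N)"
    and sN: "\<forall>q\<in>set N. 0 < side q \<and> side q \<le> w \<and> cval q \<le> 2*w" using g unfolding good_def by auto
  have tB: "tiles [(w,0,be)] w 0 W be" by (rule tiles_square) (auto simp: W_def be_def)
  have tD: "tiles [(0,h,dl)] 0 h dl H" by (rule tiles_square) (auto simp: H_def dl_def hw algebra_simps)
  have tC: "tiles [(dl,be,ga)] dl be W H" by (rule tiles_square) (auto simp: W_def H_def dl_def be_def ga_def algebra_simps)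
  have tM0: "tiles M w be (w + a*m) (be + b*m)" unfolding M_def by (rule tiles_euclid)
  have tM: "tiles M w be dl h" using tM0 by (simp add: dl_def be_def hw algebra_simps)
  have tiles: "tiles (gad N w h a b m) 0 0 W H"
    unfolding gd by (rule tiles_pinwheel[OF tN tB tD tC tM])
  have Mprops: "\<forall>q\<in>set M. W < cval q \<and> cval q < H \<and> 0 < side q \<and> side q \<le> W"
  proof
    fix q assume "q \<in> set M"
    from euclid_props[OF this[unfolded M_def]]
    show "W < cval q \<and> cval q < H \<and> 0 < side q \<and> side q \<le> W"
      by (auto simp: W_def H_def be_def algebra_simps)
  qed
  have cB: "cval (w,0,be) = W" by (simp add: W_def be_def)
  have cD: "cval (0,h,dl) = H" by (simp add: H_def dl_def hw algebra_simps)
  have cC: "cval (dl,be,ga) = H + dl" by (simp add: H_def dl_def be_def ga_def algebra_simps)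
  have pm: "0 < (2*a+b)*m" using pos by simp
  have Nlt: "\<forall>q\<in>set N. cval q < W"
  proof
    fix q assume "q \<in> set N" hence "cval q \<le> 2*w" using sN by auto
    thus "cval q < W" using pm unfolding W_def by linarith
  qed
  have dl0: "0 < dl" using pos by (simp add: dl_def)
  have mc: "map cval (gad N w h a b m) = map cval N @ [W, H, H+dl] @ map cval M"
    unfolding gd using cB cD cC by simp
  have WH: "W < H" using pos by (simp add: W_def H_def)
  have dist: "distinct (map cval (gad N w h a b m))"
    unfolding mc
    by (rule dist3[OF _ _ _ _ WH dl0]) (use dN euclid_distinct[of w be "a*m" "b*m", folded M_def] Nlt Mprops in auto)
  have sides: "\<forall>q\<in>set (gad N w h a b m). 0 < side q \<and> side q \<le> W \<and> cval q \<le> 2*W"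
  proof -
    have "\<forall>q\<in>set N. 0 < side q \<and> side q \<le> W \<and> cval q \<le> 2*W" using sN by (auto simp: W_def)
    moreover have "\<forall>q\<in>set M. 0 < side q \<and> side q \<le> W \<and> cval q \<le> 2*W"
    proof
      fix q assume "q \<in> set M"
      hence "0 < side q \<and> side q \<le> W \<and> cval q < H" using Mprops by auto
      thus "0 < side q \<and> side q \<le> W \<and> cval q \<le> 2*W" unfolding Weq Heq using A0 B0 by auto
    qed
    moreover have "0 < be \<and> be \<le> W \<and> W \<le> 2*W" unfolding beq Weq using A0 B0 by auto
    moreover have "0 < dl \<and> dl \<le> W \<and> H \<le> 2*W" unfolding dleq Weq Heq using A0 B0 by auto
    moreover have "0 < ga \<and> ga \<le> W \<and> H + dl \<le> 2*W" unfolding gaeq dleq Weq Heq using A0 B0 by auto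
    ultimately show ?thesis unfolding gd using cB cD cC by auto
  qed
  show ?thesis unfolding good_def W_def[symmetric] H_def[symmetric] using tiles dist sides by blast
qed



fun horner :: "nat list \<Rightarrow> nat" where
  "horner [] = 0"
| "horner (d # ds) = d * 4 ^ length ds + horner ds"

fun chainO :: "nat \<Rightarrow> sq list \<Rightarrow> nat \<Rightarrow> nat \<Rightarrow> nat list \<Rightarrow> sq list \<times> nat \<times> nat" where
  "chainO off L w h [] = (L, w, h)"
| "chainO off L w h (d # ds) =
     chainO off (gad L w h (4+d) (4-d) (2^(length ds + off)))
       (2*w + (12+d)*2^(length ds + off)) (2*w + (12+d)*2^(length ds + off) + 8*2^(length ds + off)) ds"

lemma chainO_append:
  "chainO off L w h (xs @ ys) = (case chainO (off + length ys) L w h xs of (L1,w1,h1) \<Rightarrow> chainO off L1 w1 h1 ys)"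
  by (induction xs arbitrary: L w h) (simp_all add: ac_simps)

lemma gad_length:
  assumes "0 < m" shows "length (gad L w h a b m) \<le> length L + 3 + (a + b)"
proof -
  have "length (euclid w (w+(2*a+b)*m) (a*m) (b*m)) * m \<le> a*m + b*m"
    by (rule euclid_length) (use assms in auto)
  hence "length (euclid w (w+(2*a+b)*m) (a*m) (b*m)) * m \<le> (a + b) * m"
    by (simp add: add_mult_distrib)
  hence "length (euclid w (w+(2*a+b)*m) (a*m) (b*m)) \<le> a + b"
    using assms by simp
  thus ?thesis by (simp add: gad_def)
qed

lemma chain_inv:
  assumes "good L w h" "h = w + 8 * 2^(length ds + off)" "\<forall>d\<in>set ds. d < 4"
    "chainO off L w h ds = (L', w', h')"
  shows "good L' w' h' \<and> h' = w' + 8 * 2^off \<and>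
         w' + 4 * 2^off = 2^length ds * w + 2^off * (4 * 4^length ds + horner ds) \<and>
         length L' \<le> length L + 11 * length ds"
  using assms
proof (induction ds arbitrary: L w h)
  case Nil thus ?case by auto
next
  case (Cons d ds)
  define m where "m = (2::nat)^(length ds + off)"
  have m0: "0 < m" by (simp add: m_def)
  have d4: "d < 4" using Cons.prems(3) by simp
  define W where "W = 2*w + (12+d)*m"
  define H where "H = 2*w + (12+d)*m + 8*m"
  have ch: "chainO off (gad L w h (4+d) (4-d) m) W H ds = (L', w', h')"
    using Cons.prems(4) by (simp add: m_def W_def H_def)
  have hw: "h = w + 2*((4+d)+(4-d))*m"
    using Cons.prems(2) d4 by (simp add: m_def)
  have gg: "good (gad L w h (4+d) (4-d) m) (2*w+(2*(4+d)+(4-d))*m) (2*w+(3*(4+d)+2*(4-d))*m)"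
    by (rule gad_good[OF Cons.prems(1) _ _ m0 hw]) (use d4 in auto)
  have e1: "2*w+(2*(4+d)+(4-d))*m = W" using d4 by (simp add: W_def algebra_simps)
  have e2: "2*w+(3*(4+d)+2*(4-d))*m = H" using d4 by (simp add: H_def algebra_simps)
  have g2: "good (gad L w h (4+d) (4-d) m) W H" using gg unfolding e1 e2 .
  have H2: "H = W + 8 * 2^(length ds + off)" by (simp add: H_def W_def m_def)
  have IH: "good L' w' h' \<and> h' = w' + 8 * 2^off \<and>
         w' + 4 * 2^off = 2^length ds * W + 2^off * (4 * 4^length ds + horner ds) \<and>
         length L' \<le> length (gad L w h (4+d) (4-d) m) + 11 * length ds"
    by (rule Cons.IH[OF g2 H2 _ ch]) (use Cons.prems(3) in simp)
  have pw: "2^length ds * m = 2^off * 4^length ds"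
    by (simp add: m_def power_add power_mult_distrib[symmetric] mult_ac)
  have "w' + 4 * 2^off = 2^length ds * W + 2^off * (4 * 4^length ds + horner ds)" using IH by blast
  also have "\<dots> = 2^(Suc (length ds)) * w + 2^off * (4 * 4^(Suc (length ds)) + horner (d#ds))"
    unfolding W_def using pw by (simp add: algebra_simps)
  finally have wf: "w' + 4 * 2^off = 2^length (d#ds) * w + 2^off * (4 * 4^length (d#ds) + horner (d#ds))" by simp
  have "length (gad L w h (4+d) (4-d) m) \<le> length L + 3 + ((4+d)+(4-d))" by (rule gad_length[OF m0])
  hence "length L' \<le> length L + 11 * length (d#ds)" using IH d4 by simp
  thus ?case using IH wf by blast
qed



lemma R0_good:
  assumes g: "0 < g" and a: "8 \<le> a0"
  shows "good (euclid 0 0 (a0*g) (8*g) @ [(0, 8*g, a0*g)]) (a0*g) (a0*g + 8*g)"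
    and "length (euclid 0 0 (a0*g) (8*g) @ [(0, 8*g, a0*g)]) \<le> a0 + 9"
proof -
  define w where "w = a0*g"
  have w8: "8*g \<le> w" using a g by (simp add: w_def)
  have w0: "0 < w" using w8 g by simp
  have t1: "tiles (euclid 0 0 w (8*g)) 0 0 w (8*g)" using tiles_euclid[of 0 0 w "8*g"] by simp
  have t2: "tiles [(0, 8*g, w)] 0 (8*g) w (w + 8*g)" by (rule tiles_square) auto
  have tl: "tiles (euclid 0 0 w (8*g) @ [(0, 8*g, w)]) 0 0 w (w + 8*g)" by (rule tiles_vsplit[OF t1 t2])
  have ep: "\<forall>q\<in>set (euclid 0 0 w (8*g)). 0 < cval q \<and> cval q < w + 8*g \<and> 0 < side q \<and> side q \<le> w"
    using euclid_props[of _ 0 0 w "8*g"] by auto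
  have dl: "distinct (map cval (euclid 0 0 w (8*g) @ [(0, 8*g, w)]))"
    using euclid_distinct[of 0 0 w "8*g"] ep by (auto simp: distinct_append)
  have sd: "\<forall>q\<in>set (euclid 0 0 w (8*g) @ [(0, 8*g, w)]). 0 < side q \<and> side q \<le> w \<and> cval q \<le> 2*w"
    using ep w8 w0 by auto
  show "good (euclid 0 0 (a0*g) (8*g) @ [(0, 8*g, a0*g)]) (a0*g) (a0*g + 8*g)"
    using tl dl sd unfolding good_def w_def by blast
  have "length (euclid 0 0 (a0*g) (8*g)) * g \<le> a0*g + 8*g"
    by (rule euclid_length) (use g in auto)
  hence "length (euclid 0 0 (a0*g) (8*g)) * g \<le> (a0 + 8) * g" by (simp add: algebra_simps)
  hence "length (euclid 0 0 (a0*g) (8*g)) \<le> a0 + 8" using g by simp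
  thus "length (euclid 0 0 (a0*g) (8*g) @ [(0, 8*g, a0*g)]) \<le> a0 + 9" by simp
qed

lemma final_mod:
  assumes g: "good L1 w1 h1" and h1: "h1 = w1 + 32" and d1: "d1 < 4" and d2: "d2 = 1 \<or> d2 = 3"
    and p: "p = 2*(2*w1 + (12+d1)*2) + (12+d2) + 8"
  shows "distinct (map (\<lambda>q. cval q mod p)
           (gad (gad L1 w1 h1 (4+d1) (4-d1) 2) (2*w1 + (12+d1)*2) (2*w1 + (12+d1)*2 + 16) (4+d2) (4-d2) 1))"
proof -
  define W1 where "W1 = 2*w1 + (12+d1)*2"
  define H1 where "H1 = W1 + 16"
  define L2 where "L2 = gad L1 w1 h1 (4+d1) (4-d1) 2"
  define W2 where "W2 = 2*W1 + (12+d2)"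
  define H2 where "H2 = W2 + 8"
  define L3 where "L3 = gad L2 W1 H1 (4+d2) (4-d2) 1"
  define dl2 where "dl2 = W1 + (4 + d2)"
  have pH: "p = H2" unfolding p H2_def W2_def W1_def by simp
  have hw1: "h1 = w1 + 2*((4+d1)+(4-d1))*2" using h1 d1 by simp
  have gg2: "good L2 (2*w1+(2*(4+d1)+(4-d1))*2) (2*w1+(3*(4+d1)+2*(4-d1))*2)"
    unfolding L2_def by (rule gad_good[OF g _ _ _ hw1]) (use d1 in auto)
  have e1: "2*w1+(2*(4+d1)+(4-d1))*2 = W1" "2*w1+(3*(4+d1)+2*(4-d1))*2 = H1"
    using d1 by (simp_all add: W1_def H1_def algebra_simps)
  have g2: "good L2 W1 H1" using gg2 unfolding e1 .
  have hw2: "H1 = W1 + 2*((4+d2)+(4-d2))*1" using d2 by (auto simp: H1_def)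
  have gg3: "good L3 (2*W1+(2*(4+d2)+(4-d2))*1) (2*W1+(3*(4+d2)+2*(4-d2))*1)"
    unfolding L3_def by (rule gad_good[OF g2 _ _ _ hw2]) (use d2 in auto)
  have e2: "2*W1+(2*(4+d2)+(4-d2))*1 = W2" "2*W1+(3*(4+d2)+2*(4-d2))*1 = H2"
    using d2 by (auto simp: W2_def H2_def)
  have g3: "good L3 W2 H2" using gg3 unfolding e2 .
  have dL3: "distinct (map cval L3)" using g3 unfolding good_def by blast
  have L2c: "\<forall>q\<in>set L2. 0 < cval q \<and> cval q < W2 \<and> cval q \<noteq> dl2"
  proof
    fix q assume q: "q \<in> set L2"
    have "cval q \<le> 2*W1" "0 < side q" using g2 q unfolding good_def by auto
    hence c1: "0 < cval q" "cval q < W2" by (cases q, simp, simp add: W2_def)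
    have "cval q \<noteq> dl2"
    proof -
      have "q \<in> set L1 \<or> q = (w1,0,w1+(2*(4+d1)+(4-d1))*2) \<or> q = (0,h1,w1+(4+d1)*2) \<or>
            q = (w1+(4+d1)*2, w1+(2*(4+d1)+(4-d1))*2, w1+((4+d1)+(4-d1))*2) \<or>
            q \<in> set (euclid w1 (w1+(2*(4+d1)+(4-d1))*2) ((4+d1)*2) ((4-d1)*2))"
        using q unfolding L2_def gad_def by auto
      thus ?thesis
      proof (elim disjE)
        assume "q \<in> set L1"
        hence "cval q \<le> 2*w1" using g unfolding good_def by auto
        thus ?thesis by (simp add: dl2_def W1_def)
      next
        assume "q = (w1,0,w1+(2*(4+d1)+(4-d1))*2)"
        thus ?thesis using d1 d2 by (auto simp: dl2_def W1_def)
      next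
        assume "q = (0,h1,w1+(4+d1)*2)"
        thus ?thesis using d1 d2 h1 by (auto simp: dl2_def W1_def)
      next
        assume "q = (w1+(4+d1)*2, w1+(2*(4+d1)+(4-d1))*2, w1+((4+d1)+(4-d1))*2)"
        thus ?thesis using d1 d2 by (auto simp: dl2_def W1_def)
      next
        assume qe: "q \<in> set (euclid w1 (w1+(2*(4+d1)+(4-d1))*2) ((4+d1)*2) ((4-d1)*2))"
        obtain t where "cval q = w1 + (w1+(2*(4+d1)+(4-d1))*2) + 2*t"
          using euclid_even[OF _ _ qe] by auto
        hence "cval q = W1 + 2*t" using d1 by (simp add: W1_def algebra_simps)
        thus ?thesis using d2 unfolding dl2_def by presburger
      qed
    qed
    thus "0 < cval q \<and> cval q < W2 \<and> cval q \<noteq> dl2" using c1 by simp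
  qed
  have L3c: "\<forall>q\<in>set L3. (0 < cval q \<and> cval q < p \<and> cval q \<noteq> dl2) \<or> cval q = p \<or> cval q = p + dl2"
  proof
    fix q assume q: "q \<in> set L3"
    have "q \<in> set L2 \<or> q = (W1,0,W1+(2*(4+d2)+(4-d2))*1) \<or> q = (0,H1,W1+(4+d2)*1) \<or>
          q = (W1+(4+d2)*1, W1+(2*(4+d2)+(4-d2))*1, W1+((4+d2)+(4-d2))*1) \<or>
          q \<in> set (euclid W1 (W1+(2*(4+d2)+(4-d2))*1) ((4+d2)*1) ((4-d2)*1))"
      using q unfolding L3_def gad_def by auto
    thus "(0 < cval q \<and> cval q < p \<and> cval q \<noteq> dl2) \<or> cval q = p \<or> cval q = p + dl2"
    proof (elim disjE)
      assume "q \<in> set L2" thus ?thesis using L2c pH by (auto simp: H2_def)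
    next
      assume "q = (W1,0,W1+(2*(4+d2)+(4-d2))*1)"
      thus ?thesis using d2 pH by (auto simp: dl2_def H2_def W2_def)
    next
      assume "q = (0,H1,W1+(4+d2)*1)"
      thus ?thesis using d2 pH by (auto simp: dl2_def H2_def W2_def H1_def)
    next
      assume "q = (W1+(4+d2)*1, W1+(2*(4+d2)+(4-d2))*1, W1+((4+d2)+(4-d2))*1)"
      thus ?thesis using d2 pH by (auto simp: dl2_def H2_def W2_def)
    next
      assume qe: "q \<in> set (euclid W1 (W1+(2*(4+d2)+(4-d2))*1) ((4+d2)*1) ((4-d2)*1))"
      from euclid_props[OF qe]
      show ?thesis using d2 pH by (auto simp: dl2_def H2_def W2_def)
    qed
  qed
  have dlp: "0 < dl2" "dl2 < p" using pH by (auto simp: dl2_def H2_def W2_def)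
  have inj: "inj_on (\<lambda>v. v mod p) (cval ` set L3)"
  proof (rule inj_onI)
    fix u v assume u: "u \<in> cval ` set L3" and v: "v \<in> cval ` set L3" and e: "u mod p = v mod p"
    have cu: "(0 < u \<and> u < p \<and> u \<noteq> dl2) \<or> u = p \<or> u = p + dl2" using L3c u by auto
    have cv: "(0 < v \<and> v < p \<and> v \<noteq> dl2) \<or> v = p \<or> v = p + dl2" using L3c v by auto
    show "u = v" using cu cv e dlp by (auto simp: mod_if)
  qed
  have "distinct (map (\<lambda>v. v mod p) (map cval L3))"
    using dL3 inj by (simp add: distinct_map comp_inj_on)
  thus ?thesis unfolding L3_def L2_def H1_def W1_def by (simp add: comp_def)
qed



fun digits4 :: "nat \<Rightarrow> nat \<Rightarrow> nat list" where
  "digits4 0 E = []"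
| "digits4 (Suc k) E = digits4 k (E div 4) @ [E mod 4]"

lemma digits4_length: "length (digits4 k E) = k"
  by (induction k arbitrary: E) auto

lemma digits4_lt: "\<forall>d\<in>set (digits4 k E). d < 4"
  by (induction k arbitrary: E) auto

lemma horner_snoc: "horner (xs @ [x]) = 4 * horner xs + x"
  by (induction xs) (auto simp: algebra_simps)

lemma horner_digits4: "horner (digits4 k E) = E mod 4^k"
proof (induction k arbitrary: E)
  case 0 thus ?case by simp
next
  case (Suc k)
  have "E mod (4 * 4^k) = 4 * (E div 4 mod 4^k) + E mod 4" by (rule mod_mult2_eq)
  thus ?case using Suc by (simp add: horner_snoc)
qed

lemma construction:
  assumes k2: "2 \<le> k" and a8: "8 \<le> a0" and Ek: "E < 4^k" and oE: "odd E"
    and pe: "p = (a0 + 4) * 4^k + E + 4"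
  shows "\<exists>L. L \<noteq> [] \<and> length L \<le> a0 + 9 + 11*k \<and> distinct (map (\<lambda>q. cval q mod p) L) \<and>
            (\<forall>q\<in>set L. side q mod p \<noteq> 0) \<and> image_mset (modp p) (MS L) = image_mset (modp p) (AS L)"
proof -
  define g where "g = (2::nat)^k"
  have g0: "0 < g" by (simp add: g_def)
  define R0 where "R0 = euclid 0 0 (a0*g) (8*g) @ [(0, 8*g, a0*g)]"
  have gR0: "good R0 (a0*g) (a0*g + 8*g)" and lR0: "length R0 \<le> a0 + 9"
    using R0_good[OF g0 a8] unfolding R0_def by auto
  define ds where "ds = digits4 k E"
  obtain j where kj: "k = Suc (Suc j)" using k2 by (metis add_2_eq_Suc le_Suc_ex)
  define pre where "pre = digits4 j (E div 4 div 4)"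
  define d1 where "d1 = E div 4 mod 4"
  define d2 where "d2 = E mod 4"
  have dsp: "ds = pre @ [d1, d2]" unfolding ds_def pre_def d1_def d2_def kj by simp
  have lpre: "length pre = j" unfolding pre_def by (simp add: digits4_length)
  have d1l: "d1 < 4" unfolding d1_def by simp
  have d2o: "d2 = 1 \<or> d2 = 3"
  proof -
    have a: "d2 < 4" unfolding d2_def by simp
    have "E mod 4 mod 2 = E mod 2" using mod_mod_cancel[of 2 4 E] by simp
    hence b: "d2 mod 2 = 1" using oE unfolding d2_def by (simp add: odd_iff_mod_2_eq_one)
    show ?thesis using a b by presburger
  qed
  have dlt: "\<forall>d\<in>set ds. d < 4" unfolding ds_def by (rule digits4_lt)
  obtain L' w' h' where ch: "chainO 0 R0 (a0*g) (a0*g + 8*g) ds = (L', w', h')" by (cases "chainO 0 R0 (a0*g) (a0*g + 8*g) ds") auto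
  have h0: "a0*g + 8*g = a0*g + 8 * 2^(length ds + 0)" by (simp add: ds_def digits4_length g_def)
  have ci: "good L' w' h' \<and> h' = w' + 8 * 2^0 \<and>
         w' + 4 * 2^0 = 2^length ds * (a0*g) + 2^0 * (4 * 4^length ds + horner ds) \<and>
         length L' \<le> length R0 + 11 * length ds"
    by (rule chain_inv[OF gR0 h0 dlt ch])
  have lds: "length ds = k" by (simp add: ds_def digits4_length)
  have hds: "horner ds = E" unfolding ds_def horner_digits4 using Ek by simp
  have "2^k * (a0 * g) = a0 * 4^k" by (simp add: g_def power_mult_distrib[symmetric])
  hence wp: "w' + 4 = a0 * 4^k + 4 * 4^k + E" using ci lds hds by simp
  have hp: "h' = p" using ci wp pe by (simp add: algebra_simps)
  have gL: "good L' w' h'" using ci by blast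
  obtain L1 w1 h1 where c1: "chainO 2 R0 (a0*g) (a0*g + 8*g) pre = (L1, w1, h1)"
    by (cases "chainO 2 R0 (a0*g) (a0*g + 8*g) pre") auto
  have h0': "a0*g + 8*g = a0*g + 8 * 2^(length pre + 2)" using lpre by (simp add: g_def kj)
  have dlt': "\<forall>d\<in>set pre. d < 4" using dlt dsp by simp
  have ci1: "good L1 w1 h1 \<and> h1 = w1 + 8 * 2^2 \<and>
         w1 + 4 * 2^2 = 2^length pre * (a0*g) + 2^2 * (4 * 4^length pre + horner pre) \<and>
         length L1 \<le> length R0 + 11 * length pre"
    by (rule chain_inv[OF gR0 h0' dlt' c1])
  have "chainO 0 R0 (a0*g) (a0*g + 8*g) ds = chainO 0 L1 w1 h1 [d1, d2]"
  proof -
    have c1': "chainO (0 + length [d1, d2]) R0 (a0*g) (a0*g + 8*g) pre = (L1, w1, h1)" using c1 by (simp add: numeral_2_eq_2)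
    show ?thesis unfolding dsp chainO_append c1' by simp
  qed
  hence ch2: "chainO 0 L1 w1 h1 [d1, d2] = (L', w', h')" using ch by simp
  define W1 where "W1 = 2*w1 + (12+d1)*2"
  have L'e: "L' = gad (gad L1 w1 h1 (4+d1) (4-d1) 2) W1 (W1 + 16) (4+d2) (4-d2) 1"
    and h'e: "h' = 2*W1 + (12+d2) + 8"
    using ch2 by (simp_all add: W1_def)
  have dm: "distinct (map (\<lambda>q. cval q mod p) L')"
    unfolding L'e W1_def
    by (rule final_mod[of L1 w1 h1]) (use ci1 d1l d2o h'e hp W1_def in auto)
  have sd: "\<forall>q\<in>set L'. side q mod p \<noteq> 0"
  proof
    fix q assume "q \<in> set L'"
    hence "0 < side q" "side q \<le> w'" using gL unfolding good_def by auto
    moreover have "w' < p" using ci hp by simp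
    ultimately show "side q mod p \<noteq> 0" by simp
  qed
  have cl: "image_mset (modp p) (MS L') = image_mset (modp p) (AS L')"
    by (rule tiles_close_h[of L' w' h']) (use gL hp in \<open>auto simp: good_def\<close>)
  have ne: "L' \<noteq> []" unfolding L'e gad_def by simp
  have len: "length L' \<le> a0 + 9 + 11*k" using ci lR0 lds by simp
  show ?thesis using ne len dm sd cl by blast
qed



lemma exists_k: "12 \<le> (n::nat) \<Longrightarrow> \<exists>k. 12 * 4^k \<le> n \<and> n < 48 * 4^k"
proof (induction n rule: less_induct)
  case (less n)
  show ?case
  proof (cases "n < 48")
    case True thus ?thesis using less.prems by (intro exI[of _ 0]) simp
  next
    case False
    have a: "12 \<le> n div 4" using False by simp
    have b: "n div 4 < n" using False by simp
    obtain k where k: "12 * 4^k \<le> n div 4" "n div 4 < 48 * 4^k" using less.IH[OF b a] by blast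
    have "12 * 4^Suc k \<le> n" using k(1) by simp
    moreover have "n < 48 * 4^Suc k" using k(2) by simp
    ultimately show ?thesis by blast
  qed
qed

lemma strip:
  assumes p: "2 \<le> p"
  shows "\<exists>L. L \<noteq> [] \<and> length L \<le> p + 1 \<and> distinct (map (\<lambda>q. cval q mod p) L) \<and>
            (\<forall>q\<in>set L. side q mod p \<noteq> 0) \<and> image_mset (modp p) (MS L) = image_mset (modp p) (AS L)"
proof -
  define L where "L = euclid 0 0 p 1"
  have ne: "L \<noteq> []" unfolding L_def using p by (subst euclid.simps) simp
  have len: "length L \<le> p + 1" unfolding L_def using euclid_length[of 1 p 1 0 0] by simp
  have pr: "\<forall>q\<in>set L. 0 < cval q \<and> cval q < p + 1 \<and> 0 < side q \<and> side q \<le> 1"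
    unfolding L_def using euclid_props[of _ 0 0 p 1] by auto
  have sd: "\<forall>q\<in>set L. side q mod p \<noteq> 0" using pr p by auto
  have dL: "distinct (map cval L)" unfolding L_def by (rule euclid_distinct)
  have inj: "inj_on (\<lambda>v. v mod p) (cval ` set L)"
  proof (rule inj_onI)
    fix u v assume u: "u \<in> cval ` set L" and v: "v \<in> cval ` set L" and e: "u mod p = v mod p"
    have "0 < u" "u \<le> p" "0 < v" "v \<le> p" using pr u v by auto
    thus "u = v" using e by (auto simp: mod_if split: if_splits)
  qed
  have "distinct (map (\<lambda>v. v mod p) (map cval L))"
    using dL inj by (simp add: distinct_map comp_inj_on)
  hence dm: "distinct (map (\<lambda>q. cval q mod p) L)" by (simp add: comp_def)
  have cl: "image_mset (modp p) (MS L) = image_mset (modp p) (AS L)"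
    by (rule tiles_close_w[of L p 1]) (use tiles_euclid[of 0 0 p 1] in \<open>simp_all add: L_def\<close>)
  show ?thesis using ne len dm sd cl by blast
qed

lemma ln2_ge: "1/2 \<le> ln (2::real)"
proof -
  have e: "exp (1/2::real) * exp (1/2) = exp 1" by (simp add: exp_add[symmetric])
  have "exp (1/2::real) \<le> 2"
  proof (rule ccontr)
    assume "\<not> exp (1/2::real) \<le> 2"
    hence "2 < exp (1/2::real)" by simp
    hence "2 * 2 < exp (1/2::real) * exp (1/2)" by (intro mult_strict_mono) auto
    thus False using e exp_le by simp
  qed
  thus ?thesis by (subst ln_ge_iff) auto
qed

theorem theorem5p1:
  shows "\<exists>C::real. C > 0 \<and>
    (\<forall>p::nat. prime p \<longrightarrow>
      (\<exists>T. latin_trade p (addtab p) T \<and> real (card T) \<le> C * ln (real p) \<and>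
           (\<forall>s<p. sym_count T s = 2 \<or> sym_count T s = 0)))"
proof (intro exI[of _ 1200] conjI allI impI)
  show "(0::real) < 1200" by simp
next
  fix p :: nat assume pr: "prime p"
  have p2: "2 \<le> p" using prime_ge_2_nat[OF pr] .
  have lnp2: "ln 2 \<le> ln (real p)" using p2 by simp
  show "\<exists>T. latin_trade p (addtab p) T \<and> real (card T) \<le> 1200 * ln (real p) \<and>
           (\<forall>s<p. sym_count T s = 2 \<or> sym_count T s = 0)"
  proof (cases "p < 300")
    case True
    obtain L where L: "L \<noteq> []" "length L \<le> p + 1" "distinct (map (\<lambda>q. cval q mod p) L)"
      "\<forall>q\<in>set L. side q mod p \<noteq> 0" "image_mset (modp p) (MS L) = image_mset (modp p) (AS L)"
      using strip[OF p2] by blast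
    obtain T where T: "latin_trade p (addtab p) T" "card T = 2 * length L"
      "\<forall>s<p. sym_count T s = 2 \<or> sym_count T s = 0"
      using trade_from_squares[of p L] p2 L by auto
    have "card T \<le> 600" using T(2) L(2) True by simp
    hence "real (card T) \<le> 600" by simp
    also have "\<dots> \<le> 1200 * ln (real p)" using ln2_ge lnp2 by simp
    finally show ?thesis using T by blast
  next
    case False
    have p4: "12 \<le> p - 4" using False by simp
    obtain k where k: "12 * 4^k \<le> p - 4" "p - 4 < 48 * 4^k" using exists_k[OF p4] by blast
    define a0 where "a0 = (p - 4) div 4^k - 4"
    define E where "E = (p - 4) mod 4^k"
    have k2: "2 \<le> k"
    proof (rule ccontr)
      assume "\<not> 2 \<le> k"
      hence "4^k \<le> (4::nat)^1" by (intro power_increasing) auto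
      thus False using k(2) False by simp
    qed
    have "(12 * 4^k) div 4^k \<le> (p - 4) div 4^k" by (rule div_le_mono[OF k(1)])
    hence q12: "12 \<le> (p - 4) div 4^k" by simp
    have q48: "(p - 4) div 4^k < 48" by (rule less_mult_imp_div_less) (use k(2) in simp)
    have a8: "8 \<le> a0" using q12 by (simp add: a0_def)
    have a43: "a0 \<le> 43" using q48 by (simp add: a0_def)
    have Ek: "E < 4^k" by (simp add: E_def)
    have pe: "p = (a0 + 4) * 4^k + E + 4"
    proof -
      have "(p - 4) div 4^k * 4^k + E = p - 4" unfolding E_def by (rule div_mult_mod_eq)
      moreover have "a0 + 4 = (p - 4) div 4^k" using q12 by (simp add: a0_def)
      ultimately show ?thesis using False by simp
    qed
    have oE: "odd E"
    proof -
      have op: "odd p" using prime_odd_nat[OF pr] False by simp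
      have "(p - 4) mod 2 = 1" using op False by presburger
      moreover have "(p - 4) mod 4^k mod 2 = (p - 4) mod 2"
        by (rule mod_mod_cancel) (use k2 in \<open>simp add: dvd_power_iff\<close>)
      ultimately show ?thesis unfolding E_def by (simp add: odd_iff_mod_2_eq_one)
    qed
    obtain L where L: "L \<noteq> []" "length L \<le> a0 + 9 + 11*k" "distinct (map (\<lambda>q. cval q mod p) L)"
      "\<forall>q\<in>set L. side q mod p \<noteq> 0" "image_mset (modp p) (MS L) = image_mset (modp p) (AS L)"
      using construction[OF k2 a8 Ek oE pe] by blast
    obtain T where T: "latin_trade p (addtab p) T" "card T = 2 * length L"
      "\<forall>s<p. sym_count T s = 2 \<or> sym_count T s = 0"
      using trade_from_squares[of p L] p2 L by auto
    have cT: "card T \<le> 104 + 22 * k" using T(2) L(2) a43 by simp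
    have pk: "real (4^k) \<le> real p" using k(1) by simp
    have ln4: "1 \<le> ln (4::real)" using exp_le by (subst ln_ge_iff) auto
    have "real k * 1 \<le> real k * ln 4" by (rule mult_left_mono[OF ln4]) simp
    hence "real k \<le> real k * ln 4" by simp
    also have "\<dots> = ln (real (4^k))" by (simp add: ln_realpow)
    also have "\<dots> \<le> ln (real p)" using pk p2 by (subst ln_le_cancel_iff) auto
    finally have kln: "real k \<le> ln (real p)" .
    have lnp1: "1 \<le> ln (real p)"
    proof -
      have "exp 1 \<le> (3::real)" by (rule exp_le)
      also have "\<dots> \<le> real p" using False by simp
      finally show ?thesis using p2 by (subst ln_ge_iff) auto
    qed
    have "real (card T) \<le> 104 + 22 * real k" using cT by linarith
    also have "\<dots> \<le> 1200 * ln (real p)" using kln lnp1 by linarith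
    finally show ?thesis using T by blast
  qed
qed


end
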